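(* Let $(X,\Sigma,\mu)$ be a measure space, $n\ge1$, $\mathbb{F}\in\{\mathbb{R},\mathbb{C}\}$, $h\in L^2(X,\mu;\mathbb{F})$, $d\in\mathbb{F}^n$, and define $T:L^2(X,\mu;\mathbb{F}^n)\to\mathbb{F}^n$ by $T(F)=\int_X h(x)f_x\,d\mu(x)$ for $F=(f_x)_{x\in X}$. Suppose $T^{-1}(\{d\})$ contains a continuous frame. Then $\mathcal{F}^{\mathbb{F}}_{(X,\mu),n}\cap T^{-1}(\{d\})$ is dense in $T^{-1}(\{d\})$ (for the norm of $L^2(X,\mu;\mathbb{F}^n)$).
   Context: A family $\Phi=(\varphi_x)_{x\in X}$ in $\mathbb{F}^n$ (with measurable coordinates) is a continuous frame indexed by $(X,\mu)$ if there are $0<A\le B$ with $A\|v\|^2\le\int_X|\langle v,\varphi_x\rangle|^2d\mu(x)\le B\|v\|^2$ for all $v\in\mathbb{F}^n$. $\mathcal{F}^{\mathbb{F}}_{(X,\mu),n}$ denotes the set of such frames, viewed as a subset of $L^2(X,\mu;\mathbb{F}^n)$ (equivalently, the elements of $L^2(X,\mu;\mathbb{F}^n)$ whose coordinate functions are linearly independent in $L^2(X,\mu;\mathbb{F})$). *)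

theory Defs
  imports "HOL-Analysis.Analysis"
begin

text \<open>F^n is modelled as 'f^'n with 'n a finite index type (n = CARD('n) \<ge> 1).
  The field F is either real (conjugation = identity) or complex (conjugation = cnj);
  the parameter c is the conjugation used in the inner product of F^n.\<close>

definition inner_F :: "('f::comm_ring_1 \<Rightarrow> 'f) \<Rightarrow> 'f^'n \<Rightarrow> 'f^'n \<Rightarrow> 'f" where
  "inner_F c v w = (\<Sum>i\<in>UNIV. v $ i * c (w $ i))"

text \<open>Square-integrable functions (representatives of elements of L^2(X,mu;V)).\<close>
definition L2_space :: "'a measure \<Rightarrow> ('a \<Rightarrow> 'b::real_normed_vector) set" where
  "L2_space M = {F. F \<in> borel_measurable M \<and> (\<integral>\<^sup>+ x. ennreal ((norm (F x))\<^sup>2) \<partial>M) < \<infinity>}"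

definition L2_dist2 :: "'a measure \<Rightarrow> ('a \<Rightarrow> 'b::real_normed_vector) \<Rightarrow> ('a \<Rightarrow> 'b) \<Rightarrow> ennreal" where
  "L2_dist2 M F G = (\<integral>\<^sup>+ x. ennreal ((norm (F x - G x))\<^sup>2) \<partial>M)"

definition cont_frame ::
  "('f::{real_normed_field,euclidean_space} \<Rightarrow> 'f) \<Rightarrow> 'a measure \<Rightarrow> ('a \<Rightarrow> 'f^'n) \<Rightarrow> bool" where
  "cont_frame c M \<Phi> \<longleftrightarrow> \<Phi> \<in> L2_space M \<and>
     (\<exists>A B. 0 < A \<and> A \<le> B \<and>
       (\<forall>v::'f^'n.
          ennreal (A * (norm v)\<^sup>2) \<le> (\<integral>\<^sup>+ x. ennreal ((norm (inner_F c v (\<Phi> x)))\<^sup>2) \<partial>M) \<and>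
          (\<integral>\<^sup>+ x. ennreal ((norm (inner_F c v (\<Phi> x)))\<^sup>2) \<partial>M) \<le> ennreal (B * (norm v)\<^sup>2)))"

definition synthT ::
  "'a measure \<Rightarrow> ('a \<Rightarrow> 'f::{real_normed_field,euclidean_space}) \<Rightarrow> ('a \<Rightarrow> 'f^'n) \<Rightarrow> 'f^'n" where
  "synthT M h \<Phi> = (\<integral> x. h x *s \<Phi> x \<partial>M)"

definition frames_dense_in_fibre ::
  "('f::{real_normed_field,euclidean_space} \<Rightarrow> 'f) \<Rightarrow> 'a measure \<Rightarrow> ('a \<Rightarrow> 'f) \<Rightarrow> 'f^'n \<Rightarrow> bool" where
  "frames_dense_in_fibre c M h d \<longleftrightarrow>
     (\<forall>\<Phi>\<in>L2_space M. synthT M h \<Phi> = d \<longrightarrow>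
        (\<forall>e>0. \<exists>\<Psi>. cont_frame c M \<Psi> \<and> synthT M h \<Psi> = d \<and> L2_dist2 M \<Phi> \<Psi> < ennreal (e\<^sup>2)))"

end

theory Submission imports Defs "HOL-Computational_Algebra.Polynomial" begin

lemma norm_smult_vec: "norm (a *s (v::'f::real_normed_field^'n)) = norm a * norm v"
  unfolding norm_vec_def by (simp add: norm_mult L2_set_right_distrib)

lemma L2_iff:
  fixes F :: "'a \<Rightarrow> 'b::real_normed_vector"
  shows "F \<in> L2_space M \<longleftrightarrow> F \<in> borel_measurable M \<and> integrable M (\<lambda>x. (norm (F x))\<^sup>2)"
  unfolding L2_space_def
  by (subst integrable_iff_bounded) (auto)

lemma L2_measurable: "F \<in> L2_space M \<Longrightarrow> F \<in> borel_measurable M"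
  by (simp add: L2_space_def)

lemma L2_int: "F \<in> L2_space M \<Longrightarrow> integrable M (\<lambda>x. (norm (F x))\<^sup>2)"
  by (simp add: L2_iff)

lemma L2_add:
  fixes F :: "'a \<Rightarrow> 'b::{banach,second_countable_topology}"
  assumes F: "F \<in> L2_space M" and G: "G \<in> L2_space M"
  shows "(\<lambda>x. F x + G x) \<in> L2_space M"
proof -
  have m: "(\<lambda>x. F x + G x) \<in> borel_measurable M" using F G by (intro borel_measurable_add) (auto simp: L2_space_def)
  have i: "integrable M (\<lambda>x. 2 * (norm (F x))\<^sup>2 + 2 * (norm (G x))\<^sup>2)"
    using L2_int[OF F] L2_int[OF G] by auto
  have "integrable M (\<lambda>x. (norm (F x + G x))\<^sup>2)"
  proof (rule Bochner_Integration.integrable_bound[OF i])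
    show "(\<lambda>x. (norm (F x + G x))\<^sup>2) \<in> borel_measurable M" using m by measurable
    show "AE x in M. norm ((norm (F x + G x))\<^sup>2) \<le> norm (2 * (norm (F x))\<^sup>2 + 2 * (norm (G x))\<^sup>2)"
    proof (intro AE_I2)
      fix x
      have "norm (F x + G x) \<le> norm (F x) + norm (G x)" by (rule norm_triangle_ineq)
      hence "(norm (F x + G x))\<^sup>2 \<le> (norm (F x) + norm (G x))\<^sup>2"
        by (simp add: power_mono)
      also have "\<dots> \<le> 2 * (norm (F x))\<^sup>2 + 2 * (norm (G x))\<^sup>2"
        using sum_squares_bound[of "norm (F x)" "norm (G x)"] by (simp add: power2_sum)
      finally show "norm ((norm (F x + G x))\<^sup>2) \<le> norm (2 * (norm (F x))\<^sup>2 + 2 * (norm (G x))\<^sup>2)"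
        by simp
    qed
  qed
  with m show ?thesis by (simp add: L2_iff)
qed

lemma L2_scale:
  fixes F :: "'a \<Rightarrow> 'b::{banach,second_countable_topology}"
  assumes F: "F \<in> L2_space M"
  shows "(\<lambda>x. t *\<^sub>R F x) \<in> L2_space M"
proof -
  have "integrable M (\<lambda>x. t\<^sup>2 * (norm (F x))\<^sup>2)" using L2_int[OF F] by auto
  moreover have "(\<lambda>x. t\<^sup>2 * (norm (F x))\<^sup>2) = (\<lambda>x. (norm (t *\<^sub>R F x))\<^sup>2)"
    by (auto simp: power_mult_distrib)
  ultimately show ?thesis using L2_measurable[OF F] by (simp add: L2_iff)
qed

lemma L2_minus:
  fixes F :: "'a \<Rightarrow> 'b::{banach,second_countable_topology}"
  assumes F: "F \<in> L2_space M" and G: "G \<in> L2_space M"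
  shows "(\<lambda>x. F x - G x) \<in> L2_space M"
  using L2_add[OF F L2_scale[OF G, of "-1"]] by simp

lemma L2_prod_int:
  fixes f :: "'a \<Rightarrow> 'b::{real_normed_vector}" and g :: "'a \<Rightarrow> 'c::real_normed_vector"
  assumes f: "f \<in> L2_space M" and g: "g \<in> L2_space M"
    and m: "k \<in> borel_measurable M"
    and b: "\<And>x. norm (k x) \<le> norm (f x) * norm (g x)"
  shows "integrable M (k::'a \<Rightarrow> 'd::{banach,second_countable_topology})"
proof -
  have i: "integrable M (\<lambda>x. (norm (f x))\<^sup>2 + (norm (g x))\<^sup>2)"
    using L2_int[OF f] L2_int[OF g] by auto
  show ?thesis
  proof (rule Bochner_Integration.integrable_bound[OF i m], intro AE_I2)
    fix x
    have "norm (f x) * norm (g x) \<le> (norm (f x))\<^sup>2 + (norm (g x))\<^sup>2"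
    proof -
      have "0 \<le> norm (f x) * norm (g x)" by simp
      then show ?thesis using sum_squares_bound[of "norm (f x)" "norm (g x)"] by linarith
    qed
    then show "norm (k x) \<le> norm ((norm (f x))\<^sup>2 + (norm (g x))\<^sup>2)"
      using b[of x] by simp
  qed
qed


lemma comp_meas: fixes F :: "'a \<Rightarrow> 'b::real_normed_vector^'n"
  assumes "F \<in> borel_measurable M" shows "(\<lambda>x. F x $ i) \<in> borel_measurable M"
proof -
  have "continuous_on UNIV (\<lambda>x::'b^'n. x $ i)"
    by (intro linear_continuous_on bounded_linear_vec_nth)
  from borel_measurable_continuous_on[OF this assms] show ?thesis by simp
qed

lemma smult_meas:
  fixes h :: "'a \<Rightarrow> 'f::{real_normed_field,euclidean_space}" and F :: "'a \<Rightarrow> 'f^'n"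
  assumes h: "h \<in> borel_measurable M" and F: "F \<in> borel_measurable M"
  shows "(\<lambda>x. h x *s F x) \<in> borel_measurable M"
proof (rule borel_measurable_continuous_Pair[OF h F])
  have "\<And>i. continuous_on UNIV (\<lambda>x::'f^'n. x $ i)"
    by (intro linear_continuous_on bounded_linear_vec_nth)
  then have "\<And>i. continuous_on UNIV (\<lambda>p::'f \<times> ('f^'n). snd p $ i)"
    by (intro continuous_on_compose2[OF _ continuous_on_snd]) auto
  then show "continuous_on UNIV (\<lambda>x::'f \<times> ('f^'n). fst x *s snd x)"
    unfolding vector_scalar_mult_def by (intro continuous_intros)
qed

lemma poly_det:
  fixes P :: "'f::comm_ring_1 poly^'n^'n"
  shows "poly (det P) z = det (\<chi> i j. poly (P $ i $ j) z)"
  unfolding det_def by (simp add: poly_sum poly_prod poly_of_int)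


definition gram :: "('f::{real_normed_field,euclidean_space} \<Rightarrow> 'f) \<Rightarrow> 'a measure \<Rightarrow> ('a \<Rightarrow> 'f^'n) \<Rightarrow> 'f^'n^'n" where
  "gram c M \<Psi> = (\<chi> i j. \<integral>x. \<Psi> x $ i * c (\<Psi> x $ j) \<partial>M)"

locale conjF =
  fixes c :: "'f::{real_normed_field,euclidean_space} \<Rightarrow> 'f"
  assumes c_add: "c (a + b) = c a + c b"
  and c_mult: "c (a * b) = c a * c b"
  and c_inv: "c (c a) = a"
  and c_of_real: "c (of_real r) = of_real r"
  and c_sq: "z * c z = of_real ((norm z)\<^sup>2)"
  and c_norm: "norm (c z) = norm z"
  and c_cont: "continuous_on UNIV c"
begin

lemma c_zero[simp]: "c 0 = 0"
  using c_add[of 0 0] by simp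

lemma c_sum: "c (sum f A) = (\<Sum>i\<in>A. c (f i))"
  by (induction A rule: infinite_finite_induct) (auto simp: c_add)

lemma c_meas[measurable]: "c \<in> borel_measurable borel"
  using borel_measurable_continuous_onI[OF c_cont] .


lemma prod_int:
  assumes F: "F \<in> L2_space M" and G: "G \<in> L2_space M"
  shows "integrable M (\<lambda>x. (F x $ i) * c (G x $ j))"
proof (rule L2_prod_int[OF F G])
  have "(\<lambda>x. F x $ i) \<in> borel_measurable M" "(\<lambda>x. G x $ j) \<in> borel_measurable M"
    using comp_meas[OF L2_measurable[OF F]] comp_meas[OF L2_measurable[OF G]] by auto
  then show "(\<lambda>x. (F x $ i) * c (G x $ j)) \<in> borel_measurable M" by measurable
  fix x show "norm (F x $ i * c (G x $ j)) \<le> norm (F x) * norm (G x)"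
    using mult_mono[OF Finite_Cartesian_Product.norm_nth_le[where x="F x" and i=i] Finite_Cartesian_Product.norm_nth_le[where x="G x" and i=j]] by (simp add: norm_mult c_norm)
qed

lemma inner_meas:
  assumes "\<Psi> \<in> borel_measurable M"
  shows "(\<lambda>x. inner_F c v (\<Psi> x)) \<in> borel_measurable M"
proof -
  have "\<And>i. (\<lambda>x. \<Psi> x $ i) \<in> borel_measurable M" using comp_meas assms by auto
  then show ?thesis unfolding inner_F_def by measurable
qed

lemma norm_inner_le: "norm (inner_F c v w) \<le> norm v * norm w"
proof -
  have "norm (inner_F c v w) \<le> (\<Sum>i\<in>UNIV. norm (v $ i) * norm (w $ i))"
    unfolding inner_F_def using norm_sum[of "\<lambda>i. v $ i * c (w $ i)" UNIV]
    by (simp add: norm_mult c_norm)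
  also have "\<dots> = (\<Sum>i\<in>UNIV. \<bar>norm (v $ i)\<bar> * \<bar>norm (w $ i)\<bar>)" by simp
  also have "\<dots> \<le> norm v * norm w"
    unfolding norm_vec_def by (rule L2_set_mult_ineq)
  finally show ?thesis .
qed

lemma Q_int:
  assumes P: "\<Psi> \<in> L2_space M"
  shows "integrable M (\<lambda>x. (norm (inner_F c v (\<Psi> x)))\<^sup>2)"
proof (rule Bochner_Integration.integrable_bound)
  show "integrable M (\<lambda>x. (norm v)\<^sup>2 * (norm (\<Psi> x))\<^sup>2)" using L2_int[OF P] by auto
  show "(\<lambda>x. (norm (inner_F c v (\<Psi> x)))\<^sup>2) \<in> borel_measurable M"
    using inner_meas[OF L2_measurable[OF P]] by measurable
  show "AE x in M. norm ((norm (inner_F c v (\<Psi> x)))\<^sup>2) \<le> norm ((norm v)\<^sup>2 * (norm (\<Psi> x))\<^sup>2)"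
  proof (intro AE_I2)
    fix x
    have "(norm (inner_F c v (\<Psi> x)))\<^sup>2 \<le> (norm v * norm (\<Psi> x))\<^sup>2"
      by (rule power_mono[OF norm_inner_le]) simp
    then show "norm ((norm (inner_F c v (\<Psi> x)))\<^sup>2) \<le> norm ((norm v)\<^sup>2 * (norm (\<Psi> x))\<^sup>2)"
      by (simp add: power_mult_distrib)
  qed
qed

lemma gram_mult:
  assumes P: "\<Psi> \<in> L2_space M"
  shows "(gram c M \<Psi> *v v) $ i = (\<integral>x. \<Psi> x $ i * inner_F c v (\<Psi> x) \<partial>M)"
proof -
  have "(gram c M \<Psi> *v v) $ i = (\<Sum>j\<in>UNIV. (\<integral>x. \<Psi> x $ i * c (\<Psi> x $ j) \<partial>M) * v $ j)"
    by (simp add: gram_def matrix_vector_mult_def)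
  also have "\<dots> = (\<Sum>j\<in>UNIV. (\<integral>x. \<Psi> x $ i * c (\<Psi> x $ j) * v $ j \<partial>M))"
    by simp
  also have "\<dots> = (\<integral>x. (\<Sum>j\<in>UNIV. \<Psi> x $ i * c (\<Psi> x $ j) * v $ j) \<partial>M)"
    by (simp add: prod_int[OF P P])
  also have "\<dots> = (\<integral>x. \<Psi> x $ i * inner_F c v (\<Psi> x) \<partial>M)"
    by (simp add: inner_F_def sum_distrib_left mult_ac)
  finally show ?thesis .
qed

lemma gram_quad:
  assumes P: "\<Psi> \<in> L2_space M"
  shows "(\<Sum>i\<in>UNIV. c (v $ i) * (gram c M \<Psi> *v v) $ i) = of_real (\<integral>x. (norm (inner_F c v (\<Psi> x)))\<^sup>2 \<partial>M)"
proof -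
  have ii: "\<And>i. integrable M (\<lambda>x. \<Psi> x $ i * inner_F c v (\<Psi> x))"
  proof -
    fix i
    have "\<And>n. (\<lambda>x. \<Psi> x $ i * (v $ n * c (\<Psi> x $ n))) = (\<lambda>x. v $ n * (\<Psi> x $ i * c (\<Psi> x $ n)))"
      by (auto simp: mult_ac)
    then show "integrable M (\<lambda>x. \<Psi> x $ i * inner_F c v (\<Psi> x))"
      unfolding inner_F_def sum_distrib_left
      by (auto intro!: integrable_sum integrable_mult_right prod_int[OF P P])
  qed
  have "(\<Sum>i\<in>UNIV. c (v $ i) * (gram c M \<Psi> *v v) $ i)
      = (\<Sum>i\<in>UNIV. (\<integral>x. c (v $ i) * (\<Psi> x $ i * inner_F c v (\<Psi> x)) \<partial>M))"
    by (simp add: gram_mult[OF P])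
  also have "\<dots> = (\<integral>x. (\<Sum>i\<in>UNIV. c (v $ i) * (\<Psi> x $ i * inner_F c v (\<Psi> x))) \<partial>M)"
    using ii by simp
  also have "\<dots> = (\<integral>x. c (inner_F c v (\<Psi> x)) * inner_F c v (\<Psi> x) \<partial>M)"
  proof (rule Bochner_Integration.integral_cong[OF refl])
    fix x
    have "c (inner_F c v (\<Psi> x)) = (\<Sum>i\<in>UNIV. c (v $ i) * \<Psi> x $ i)"
      by (simp add: inner_F_def c_sum c_mult c_inv mult.commute)
    then show "(\<Sum>i\<in>UNIV. c (v $ i) * (\<Psi> x $ i * inner_F c v (\<Psi> x))) = c (inner_F c v (\<Psi> x)) * inner_F c v (\<Psi> x)"
      by (simp add: sum_distrib_right mult.assoc)
  qed
  also have "\<dots> = (\<integral>x. of_real ((norm (inner_F c v (\<Psi> x)))\<^sup>2) \<partial>M)"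
    by (simp add: c_sq mult.commute[of "c _"])
  also have "\<dots> = of_real (\<integral>x. (norm (inner_F c v (\<Psi> x)))\<^sup>2 \<partial>M)"
    by (rule integral_of_real) (rule Q_int[OF P])
  finally show ?thesis .
qed


lemma det_nz_iff:
  fixes G :: "'f^'n^'n" and v :: "'f^'n"
  shows "det G \<noteq> 0 \<longleftrightarrow> (\<forall>v. G *v v = 0 \<longrightarrow> v = 0)"
  using det_nz_iff_inj_gen[of "(*v) G"] vec.inj_iff_eq_0[of G] by simp

lemma Q_nn:
  assumes P: "\<Psi> \<in> L2_space M"
  shows "(\<integral>\<^sup>+ x. ennreal ((norm (inner_F c v (\<Psi> x)))\<^sup>2) \<partial>M) = ennreal (\<integral>x. (norm (inner_F c v (\<Psi> x)))\<^sup>2 \<partial>M)"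
  by (rule nn_integral_eq_integral[OF Q_int[OF P]]) auto

lemma frame_det:
  fixes \<Psi> :: "'a \<Rightarrow> 'f^'n"
  assumes F: "cont_frame c M \<Psi>"
  shows "det (gram c M \<Psi>) \<noteq> 0"
proof -
  from F have P: "\<Psi> \<in> L2_space M" by (simp add: cont_frame_def)
  from F obtain A where A: "0 < A" and fr: "\<And>v::'f^'n. ennreal (A * (norm v)\<^sup>2) \<le> (\<integral>\<^sup>+ x. ennreal ((norm (inner_F c v (\<Psi> x)))\<^sup>2) \<partial>M)"
    unfolding cont_frame_def by blast
  show ?thesis unfolding det_nz_iff
  proof (intro allI impI)
    fix v :: "'f^'n" assume z: "gram c M \<Psi> *v v = 0"
    have "of_real (\<integral>x. (norm (inner_F c v (\<Psi> x)))\<^sup>2 \<partial>M) = (0::'f)"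
      using gram_quad[OF P, of v] z by simp
    then have "(\<integral>x. (norm (inner_F c v (\<Psi> x)))\<^sup>2 \<partial>M) = 0" by simp
    then have "ennreal (A * (norm v)\<^sup>2) \<le> 0" using fr[of v] Q_nn[OF P, of v] by simp
    then have "A * (norm v)\<^sup>2 \<le> 0" by (simp add: ennreal_eq_0_iff)
    with A have "norm v = 0"
      by (metis mult_pos_pos not_le power2_eq_square zero_less_norm_iff norm_eq_zero)
    then show "v = 0" by simp
  qed
qed

lemma Q_scale:
  "(\<integral>x. (norm (inner_F c (a *\<^sub>R v) (\<Psi> x)))\<^sup>2 \<partial>M) = a\<^sup>2 * (\<integral>x. (norm (inner_F c v (\<Psi> x)))\<^sup>2 \<partial>M)"
proof -
  have "\<And>w. inner_F c (a *\<^sub>R v) w = of_real a * inner_F c v w"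
    unfolding inner_F_def vector_scaleR_component by (simp add: sum_distrib_left scaleR_conv_of_real mult.assoc)
  then show ?thesis by (simp add: norm_mult power_mult_distrib)
qed

lemma det_frame:
  fixes \<Psi> :: "'a \<Rightarrow> 'f^'n"
  assumes P: "\<Psi> \<in> L2_space M" and D: "det (gram c M \<Psi>) \<noteq> 0"
  shows "cont_frame c M \<Psi>"
proof -
  define Q where "Q v = (\<integral>x. (norm (inner_F c v (\<Psi> x)))\<^sup>2 \<partial>M)" for v :: "'f^'n"
  define G where "G = gram c M \<Psi>"
  have Qnn: "0 \<le> Q v" for v unfolding Q_def by (rule integral_nonneg_AE) auto
  have pos: "0 < Q v" if v: "v \<noteq> 0" for v
  proof (rule ccontr)
    assume "\<not> 0 < Q v"
    with Qnn[of v] have "Q v = 0" by simp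
    then have "AE x in M. (norm (inner_F c v (\<Psi> x)))\<^sup>2 = 0"
      unfolding Q_def by (subst (asm) integral_nonneg_eq_0_iff_AE[OF Q_int[OF P]]) auto
    then have ae: "AE x in M. inner_F c v (\<Psi> x) = 0" by simp
    have "G *v v = 0"
    proof (subst vec_eq_iff, intro allI)
      fix i
      have "(G *v v) $ i = (\<integral>x. \<Psi> x $ i * inner_F c v (\<Psi> x) \<partial>M)"
        unfolding G_def by (rule gram_mult[OF P])
      also have "\<dots> = 0" by (rule integral_eq_zero_AE) (use ae in auto)
      finally show "(G *v v) $ i = 0 $ i" by simp
    qed
    with D v show False unfolding G_def det_nz_iff by auto
  qed
  have Qform: "Q = (\<lambda>v. norm (\<Sum>i\<in>UNIV. c (v $ i) * (\<Sum>j\<in>UNIV. G $ i $ j * v $ j)))"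
  proof
    fix v
    have "Q v = norm (of_real (Q v) :: 'f)" using Qnn[of v] by simp
    also have "\<dots> = norm (\<Sum>i\<in>UNIV. c (v $ i) * (G *v v) $ i)"
      unfolding Q_def G_def gram_quad[OF P] ..
    finally show "Q v = norm (\<Sum>i\<in>UNIV. c (v $ i) * (\<Sum>j\<in>UNIV. G $ i $ j * v $ j))"
      by (simp add: matrix_vector_mult_def)
  qed
  have cont: "continuous_on UNIV Q"
    unfolding Qform
    by (intro continuous_intros continuous_on_compose2[OF c_cont] linear_continuous_on bounded_linear_vec_nth) auto
  have ne: "sphere (0::'f^'n) 1 \<noteq> {}"
  proof -
    have "vec 1 \<noteq> (0::'f^'n)" by (simp add: vec_eq_iff)
    then have "sgn (vec 1 :: 'f^'n) \<in> sphere 0 1" by (simp add: norm_sgn)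
    then show ?thesis by blast
  qed
  obtain u0 where u0: "u0 \<in> sphere 0 1" and umin: "\<And>u. u \<in> sphere 0 1 \<Longrightarrow> Q u0 \<le> Q u"
    using continuous_attains_inf[OF compact_sphere ne continuous_on_subset[OF cont]] by blast
  define A where "A = Q u0"
  have A: "0 < A" unfolding A_def using u0 by (intro pos) auto
  have low: "A * (norm v)\<^sup>2 \<le> Q v" for v
  proof (cases "v = 0")
    case True then show ?thesis using Qnn[of v] by simp
  next
    case False
    have v: "v = norm v *\<^sub>R sgn v" using False by (simp add: sgn_div_norm)
    have "Q v = (norm v)\<^sup>2 * Q (sgn v)"
      unfolding Q_def by (subst v) (simp only: Q_scale)
    moreover have "A \<le> Q (sgn v)" unfolding A_def using False by (intro umin) (simp add: norm_sgn)
    ultimately show ?thesis using mult_right_mono[of A "Q (sgn v)" "(norm v)\<^sup>2"] by (simp add: mult.commute)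
  qed
  define K where "K = (\<integral>x. (norm (\<Psi> x))\<^sup>2 \<partial>M)"
  have up: "Q v \<le> K * (norm v)\<^sup>2" for v
  proof -
    have "Q v \<le> (\<integral>x. (norm v)\<^sup>2 * (norm (\<Psi> x))\<^sup>2 \<partial>M)"
      unfolding Q_def
    proof (rule integral_mono[OF Q_int[OF P]])
      show "integrable M (\<lambda>x. (norm v)\<^sup>2 * (norm (\<Psi> x))\<^sup>2)" using L2_int[OF P] by auto
      fix x
      have "(norm (inner_F c v (\<Psi> x)))\<^sup>2 \<le> (norm v * norm (\<Psi> x))\<^sup>2"
        by (rule power_mono[OF norm_inner_le]) simp
      then show "(norm (inner_F c v (\<Psi> x)))\<^sup>2 \<le> (norm v)\<^sup>2 * (norm (\<Psi> x))\<^sup>2"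
        by (simp add: power_mult_distrib)
    qed
    also have "\<dots> = K * (norm v)\<^sup>2" unfolding K_def by (simp add: mult.commute)
    finally show ?thesis .
  qed
  define B where "B = max A K"
  have up2: "Q v \<le> B * (norm v)\<^sup>2" for v
    using up[of v] unfolding B_def by (meson max.cobounded2 mult_right_mono order_trans zero_le_power2)
  have AB: "A \<le> B" unfolding B_def by simp
  have l: "\<forall>v::'f^'n. ennreal (A * (norm v)\<^sup>2) \<le> (\<integral>\<^sup>+ x. ennreal ((norm (inner_F c v (\<Psi> x)))\<^sup>2) \<partial>M) \<and>
      (\<integral>\<^sup>+ x. ennreal ((norm (inner_F c v (\<Psi> x)))\<^sup>2) \<partial>M) \<le> ennreal (B * (norm v)\<^sup>2)"
  proof
    fix v :: "'f^'n"
    show "ennreal (A * (norm v)\<^sup>2) \<le> (\<integral>\<^sup>+ x. ennreal ((norm (inner_F c v (\<Psi> x)))\<^sup>2) \<partial>M) \<and>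
      (\<integral>\<^sup>+ x. ennreal ((norm (inner_F c v (\<Psi> x)))\<^sup>2) \<partial>M) \<le> ennreal (B * (norm v)\<^sup>2)"
      unfolding Q_nn[OF P] using low[of v] up2[of v] unfolding Q_def by (simp add: ennreal_leI)
  qed
  show ?thesis unfolding cont_frame_def using P A AB l by blast
qed


lemma synth_int:
  fixes F :: "'a \<Rightarrow> 'f^'n"
  assumes h: "h \<in> L2_space M" and F: "F \<in> L2_space M"
  shows "integrable M (\<lambda>x. h x *s F x)"
  by (rule L2_prod_int[OF h F smult_meas[OF L2_measurable[OF h] L2_measurable[OF F]]])
     (simp add: norm_smult_vec)

lemma dense:
  fixes h :: "'a \<Rightarrow> 'f" and d :: "'f^'n" and \<Psi>0 :: "'a \<Rightarrow> 'f^'n"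
  assumes h: "h \<in> L2_space M" and fr: "cont_frame c M \<Psi>0" and T0: "synthT M h \<Psi>0 = d"
  shows "frames_dense_in_fibre c M h d"
  unfolding frames_dense_in_fibre_def
proof (intro ballI impI allI)
  fix \<Phi> :: "'a \<Rightarrow> 'f^'n" and e :: real
  assume Phi: "\<Phi> \<in> L2_space M" and T1: "synthT M h \<Phi> = d" and e: "0 < e"
  have P0: "\<Psi>0 \<in> L2_space M" using fr by (simp add: cont_frame_def)
  define D where "D x = \<Psi>0 x - \<Phi> x" for x
  have DL: "D \<in> L2_space M" unfolding D_def by (rule L2_minus[OF P0 Phi])
  define Pt where "Pt t x = \<Phi> x + t *\<^sub>R D x" for t :: real and x
  have PtL: "Pt t \<in> L2_space M" for t
    unfolding Pt_def by (rule L2_add[OF Phi L2_scale[OF DL]])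
  have Pt1: "Pt 1 = \<Psi>0" by (auto simp: Pt_def D_def)
  have synth: "synthT M h (Pt t) = d" for t
  proof -
    have "(\<lambda>x. h x *s Pt t x) = (\<lambda>x. h x *s \<Phi> x + t *\<^sub>R (h x *s \<Psi>0 x - h x *s \<Phi> x))"
      by (auto simp: Pt_def D_def vec_eq_iff algebra_simps)
    then have "synthT M h (Pt t) = synthT M h \<Phi> + t *\<^sub>R (synthT M h \<Psi>0 - synthT M h \<Phi>)"
      unfolding synthT_def using synth_int[OF h Phi] synth_int[OF h P0] by simp
    then show ?thesis using T0 T1 by simp
  qed
  define al where "al i j = (\<integral>x. \<Phi> x $ i * c (\<Phi> x $ j) \<partial>M)" for i j
  define be where "be i j = (\<integral>x. D x $ i * c (\<Phi> x $ j) + \<Phi> x $ i * c (D x $ j) \<partial>M)" for i j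
  define ga where "ga i j = (\<integral>x. D x $ i * c (D x $ j) \<partial>M)" for i j
  define PM where "PM = (\<chi> i j. [:al i j, be i j, ga i j:])"
  define Dp where "Dp = det PM"
  have gram_t: "gram c M (Pt t) = (\<chi> i j. poly (PM $ i $ j) (of_real t))" for t
  proof -
    have "gram c M (Pt t) $ i $ j = poly (PM $ i $ j) (of_real t)" for i j
    proof -
      have e1: "(\<lambda>x. Pt t x $ i * c (Pt t x $ j)) = (\<lambda>x. \<Phi> x $ i * c (\<Phi> x $ j) +
          of_real t * (D x $ i * c (\<Phi> x $ j) + \<Phi> x $ i * c (D x $ j)) + (of_real t)\<^sup>2 * (D x $ i * c (D x $ j)))"
      proof -
        have comp: "\<And>x k. Pt t x $ k = \<Phi> x $ k + of_real t * D x $ k"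
          unfolding Pt_def vector_add_component vector_scaleR_component by (simp add: scaleR_conv_of_real)
        show ?thesis by (simp add: comp c_add c_mult c_of_real algebra_simps power2_eq_square)
      qed
      have "gram c M (Pt t) $ i $ j = (\<integral>x. Pt t x $ i * c (Pt t x $ j) \<partial>M)"
        by (simp add: gram_def)
      also have "\<dots> = al i j + of_real t * be i j + (of_real t)\<^sup>2 * ga i j"
        unfolding e1 al_def be_def ga_def
        using prod_int[OF Phi Phi] prod_int[OF DL Phi] prod_int[OF Phi DL] prod_int[OF DL DL]
        by simp
      also have "\<dots> = poly (PM $ i $ j) (of_real t)"
        by (simp add: PM_def algebra_simps power2_eq_square)
      finally show ?thesis .
    qed
    then show ?thesis by (simp add: vec_eq_iff)
  qed
  have detpoly: "det (gram c M (Pt t)) = poly Dp (of_real t)" for t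
    unfolding Dp_def poly_det gram_t ..
  have Dp0: "Dp \<noteq> 0"
  proof
    assume "Dp = 0"
    then have "det (gram c M (Pt 1)) = 0" using detpoly[of 1] by simp
    with frame_det[OF fr] Pt1 show False by simp
  qed
  have finR: "finite {t::real. poly Dp (of_real t) = 0}"
  proof -
    have "{t::real. poly Dp (of_real t) = 0} = of_real -` {z. poly Dp z = 0}" by auto
    moreover have "finite (of_real -` {z. poly Dp z = 0} :: real set)"
      by (rule finite_vimageI[OF poly_roots_finite[OF Dp0]]) (simp add: inj_on_def)
    ultimately show ?thesis by simp
  qed
  define K where "K = (\<integral>x. (norm (D x))\<^sup>2 \<partial>M)"
  have K0: "0 \<le> K" unfolding K_def by (rule integral_nonneg_AE) auto
  define \<delta> where "\<delta> = min 1 (e\<^sup>2 / (K + 1))"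
  have \<delta>: "0 < \<delta>" unfolding \<delta>_def using e K0 by simp
  have "infinite ({0<..<\<delta>} - {t::real. poly Dp (of_real t) = 0})"
    using infinite_Ioo[OF \<delta>] finR by (rule Diff_infinite_finite[rotated])
  then obtain t where t: "t \<in> {0<..<\<delta>}" and nr: "poly Dp (of_real t) \<noteq> 0"
    by (metis (mono_tags, lifting) Diff_iff finite.emptyI mem_Collect_eq ex_in_conv)
  show "\<exists>\<Psi>. cont_frame c M \<Psi> \<and> synthT M h \<Psi> = d \<and> L2_dist2 M \<Phi> \<Psi> < ennreal (e\<^sup>2)"
  proof (intro exI conjI)
    show "cont_frame c M (Pt t)"
      by (rule det_frame[OF PtL]) (use nr detpoly in simp)
    show "synthT M h (Pt t) = d" by (rule synth)
    have "L2_dist2 M \<Phi> (Pt t) = (\<integral>\<^sup>+ x. ennreal (t\<^sup>2 * (norm (D x))\<^sup>2) \<partial>M)"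
      unfolding L2_dist2_def Pt_def by (simp add: power_mult_distrib)
    also have "\<dots> = ennreal (\<integral>x. t\<^sup>2 * (norm (D x))\<^sup>2 \<partial>M)"
      by (rule nn_integral_eq_integral) (use L2_int[OF DL] in auto)
    also have "\<dots> = ennreal (t\<^sup>2 * K)" unfolding K_def by simp
    also have "\<dots> < ennreal (e\<^sup>2)"
    proof (rule ennreal_lessI)
      show "0 < e\<^sup>2" using e by simp
      have t0: "0 < t" "t < 1" "t < e\<^sup>2 / (K + 1)" using t unfolding \<delta>_def by auto
      have "t\<^sup>2 * K \<le> t * K" using t0 K0 by (simp add: power2_eq_square mult_right_mono)
      also have "\<dots> < t * (K + 1)" using t0 by simp
      also have "\<dots> < e\<^sup>2" using t0 K0 by (simp add: pos_less_divide_eq mult.commute)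
      finally show "t\<^sup>2 * K < e\<^sup>2" .
    qed
    finally show "L2_dist2 M \<Phi> (Pt t) < ennreal (e\<^sup>2)" .
  qed
qed

end


interpretation real_conj: conjF "(\<lambda>x::real. x)"
  by unfold_locales (auto simp: power2_eq_square)

interpretation complex_conj: conjF cnj
  by unfold_locales (auto simp: complex_norm_square[symmetric] simp del: of_real_power intro: continuous_intros)

theorem corollary6p2:
  fixes M :: "'a measure"
  shows "(\<forall>(h::'a \<Rightarrow> real) (d::real^'n).
            h \<in> L2_space M \<and> (\<exists>\<Phi>. cont_frame (\<lambda>x. x) M \<Phi> \<and> synthT M h \<Phi> = d)
            \<longrightarrow> frames_dense_in_fibre (\<lambda>x. x) M h d)
       \<and> (\<forall>(h::'a \<Rightarrow> complex) (d::complex^'n).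
            h \<in> L2_space M \<and> (\<exists>\<Phi>. cont_frame cnj M \<Phi> \<and> synthT M h \<Phi> = d)
            \<longrightarrow> frames_dense_in_fibre cnj M h d)"
  using real_conj.dense complex_conj.dense by blast

end
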